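(* There is $k_0$ such that for every $k\geq k_0$ the following holds. Let $G$ be a finite bipartite graph with vertex classes $A$ and $B$ satisfying $\Delta(G)\leq k^7$, $d(G)\geq k/4$, and $d_G(v)\leq k$ for every $v\in A$. Then $G$ contains a subgraph with maximum degree at most $k$ and average degree at least $k/(400\log k)$.
   Context: $d(G)=2e(G)/|V(G)|$ is the average degree, $d_G(v)$ the degree of $v$, $\Delta(G)$ the maximum degree. Logarithms are to base $2$. *)

theory Defs
  imports "HOL-Analysis.Analysis"
begin

definition is_graph :: "'a set \<Rightarrow> 'a set set \<Rightarrow> bool" where
  "is_graph V E \<longleftrightarrow> finite V \<and> (\<forall>e\<in>E. \<exists>u v. u \<in> V \<and> v \<in> V \<and> u \<noteq> v \<and> e = {u, v})"

definition degree :: "'a set set \<Rightarrow> 'a \<Rightarrow> nat" where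
  "degree E v = card {e \<in> E. v \<in> e}"

definition max_degree :: "'a set \<Rightarrow> 'a set set \<Rightarrow> nat" where
  "max_degree V E = Max (insert 0 (degree E ` V))"

definition avg_degree :: "'a set \<Rightarrow> 'a set set \<Rightarrow> real" where
  "avg_degree V E = 2 * real (card E) / real (card V)"

definition is_bipartite_with :: "'a set \<Rightarrow> 'a set set \<Rightarrow> 'a set \<Rightarrow> 'a set \<Rightarrow> bool" where
  "is_bipartite_with V E A B \<longleftrightarrow> A \<union> B = V \<and> A \<inter> B = {} \<and>
     (\<forall>e\<in>E. \<exists>a b. a \<in> A \<and> b \<in> B \<and> e = {a, b})"

definition is_subgraph :: "'a set \<Rightarrow> 'a set set \<Rightarrow> 'a set \<Rightarrow> 'a set set \<Rightarrow> bool" where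
  "is_subgraph V' E' V E \<longleftrightarrow> is_graph V' E' \<and> V' \<subseteq> V \<and> E' \<subseteq> E"

end

theory Submission
  imports Defs
begin


lemma card_partition_colors:
  assumes "finite X" "\<forall>a\<in>X. c a < (m::nat)"
  shows "(\<Sum>j<m. card {a\<in>X. c a = j}) = card X"
proof -
  have "X = (\<Union>j\<in>{..<m}. {a\<in>X. c a = j})" using assms(2) by auto
  moreover have "card (\<Union>j\<in>{..<m}. {a\<in>X. c a = j}) = (\<Sum>j<m. card {a\<in>X. c a = j})"
    by (rule card_UN_disjoint) (use assms(1) in auto)
  ultimately show ?thesis by simp
qed

lemma min_quad_bound:
  fixes x k :: nat assumes "k > 0"
  shows "real x - real x ^ 2 / (4 * real k) \<le> real (min x k)"
proof (cases "x \<le> k")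
  case True
  then show ?thesis using assms by simp
next
  case False
  have kp: "real k > 0" using assms by simp
  have "real x - real x ^ 2 / (4 * real k) \<le> real k"
  proof -
    have "4 * real k * real x - real x ^ 2 \<le> 4 * real k * real k"
      using sum_squares_ge_zero[of "real x - 2 * real k" 0]
      by (simp add: power2_eq_square algebra_simps)
    then have "(4 * real k * real x - real x ^ 2) / (4 * real k) \<le> real k"
      using kp by (simp add: divide_simps)
    then show ?thesis using kp by (simp add: diff_divide_distrib)
  qed
  then show ?thesis using False by simp
qed

lemma greedy_color:
  fixes Nb :: "'b \<Rightarrow> 'a set" and Bt :: "'b set" and m :: nat
  assumes "finite Bt" "m > 0" "finite S"
  shows "\<exists>c::'a\<Rightarrow>nat. (\<forall>a. c a < m) \<and>
    m * (\<Sum>b\<in>Bt. \<Sum>j<m. (card {a\<in>Nb b \<inter> S. c a = j})^2)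
      \<le> (\<Sum>b\<in>Bt. (card (Nb b \<inter> S))^2 + m * card (Nb b \<inter> S))"
  using assms(3)
proof (induction S rule: finite_induct)
  case empty
  show ?case by (rule exI[of _ "\<lambda>_. 0"]) (use assms(2) in simp)
next
  case (insert x S)
  obtain c where c: "\<forall>a. c a < m" and IH:
    "m * (\<Sum>b\<in>Bt. \<Sum>j<m. (card {a\<in>Nb b \<inter> S. c a = j})^2)
      \<le> (\<Sum>b\<in>Bt. (card (Nb b \<inter> S))^2 + m * card (Nb b \<inter> S))"
    using insert.IH by blast
  define old where "old b j = card {a\<in>Nb b \<inter> S. c a = j}" for b j
  define d where "d b = card (Nb b \<inter> S)" for b
  define ind where "ind b = (if x \<in> Nb b then 1 else 0::nat)" for b
  define g where "g j = (\<Sum>b\<in>Bt. ind b * old b j)" for j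
  obtain j0 where j0: "j0 < m" "\<forall>j. j < m \<longrightarrow> g j0 \<le> g j"
    using ex_has_least_nat[of "\<lambda>j. j < m" 0 g] assms(2) by blast
  define c' where "c' = c(x := j0)"
  have c': "\<forall>a. c' a < m" using c j0 by (simp add: c'_def)
  have fS: "finite (Nb b \<inter> S)" for b using insert.hyps(1) by simp
  have new: "card {a\<in>Nb b \<inter> insert x S. c' a = j} = old b j + (if x \<in> Nb b \<and> j = j0 then 1 else 0)" for b j
  proof (cases "x \<in> Nb b \<and> j = j0")
    case True
    then have "{a\<in>Nb b \<inter> insert x S. c' a = j} = insert x {a\<in>Nb b \<inter> S. c a = j}"
      using insert.hyps(2) by (auto simp: c'_def)
    moreover have "finite {a\<in>Nb b \<inter> S. c a = j}" by (rule finite_subset[OF _ fS[of b]]) auto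
    moreover have "x \<notin> {a\<in>Nb b \<inter> S. c a = j}" using insert.hyps(2) by simp
    ultimately show ?thesis using True by (simp add: old_def)
  next
    case False
    then have "{a\<in>Nb b \<inter> insert x S. c' a = j} = {a\<in>Nb b \<inter> S. c a = j}"
      using insert.hyps(2) by (auto simp: c'_def)
    then show ?thesis using False by (simp add: old_def)
  qed
  have sq: "(\<Sum>j<m. (card {a\<in>Nb b \<inter> insert x S. c' a = j})^2)
      = (\<Sum>j<m. (old b j)^2) + ind b * (2 * old b j0 + 1)" for b
  proof -
    have "(\<Sum>j<m. (card {a\<in>Nb b \<inter> insert x S. c' a = j})^2)
       = (\<Sum>j<m. (old b j)^2 + (if j = j0 then ind b * (2 * old b j0 + 1) else 0))"
      by (rule sum.cong[OF refl], unfold new) (simp add: ind_def power2_eq_square algebra_simps)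
    also have "\<dots> = (\<Sum>j<m. (old b j)^2) + ind b * (2 * old b j0 + 1)"
      using j0(1) by (simp add: sum.distrib)
    finally show ?thesis .
  qed
  have dnew: "card (Nb b \<inter> insert x S) = d b + ind b" for b
  proof (cases "x \<in> Nb b")
    case True
    then have "Nb b \<inter> insert x S = insert x (Nb b \<inter> S)" by blast
    then show ?thesis using True insert.hyps(2) fS[of b] by (simp add: d_def ind_def)
  next
    case False
    then have "Nb b \<inter> insert x S = Nb b \<inter> S" by blast
    then show ?thesis using False by (simp add: d_def ind_def)
  qed
  have sumg: "(\<Sum>j<m. g j) = (\<Sum>b\<in>Bt. ind b * d b)"
  proof -
    have "(\<Sum>j<m. g j) = (\<Sum>b\<in>Bt. \<Sum>j<m. ind b * old b j)"
      unfolding g_def by (rule sum.swap)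
    also have "\<dots> = (\<Sum>b\<in>Bt. ind b * (\<Sum>j<m. old b j))"
      by (simp only: sum_distrib_left)
    also have "\<dots> = (\<Sum>b\<in>Bt. ind b * d b)"
      using card_partition_colors[OF fS, where c=c and m=m] c by (simp add: old_def d_def)
    finally show ?thesis .
  qed
  have mg: "m * g j0 \<le> (\<Sum>b\<in>Bt. ind b * d b)"
  proof -
    have "m * g j0 = (\<Sum>j<m. g j0)" by simp
    also have "\<dots> \<le> (\<Sum>j<m. g j)" by (rule sum_mono) (use j0 in auto)
    finally show ?thesis using sumg by simp
  qed
  have IH': "m * (\<Sum>b\<in>Bt. \<Sum>j<m. (old b j)^2) \<le> (\<Sum>b\<in>Bt. (d b)^2 + m * d b)"
    using IH by (simp add: old_def d_def)
  have "m * (\<Sum>b\<in>Bt. \<Sum>j<m. (card {a\<in>Nb b \<inter> insert x S. c' a = j})^2)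
      = m * (\<Sum>b\<in>Bt. \<Sum>j<m. (old b j)^2) + 2 * (m * g j0) + m * (\<Sum>b\<in>Bt. ind b)"
    proof -
      have e1: "ind b * (2 * old b j0 + 1) = 2 * (ind b * old b j0) + ind b" for b
        by (simp add: distrib_left)
      have "(\<Sum>b\<in>Bt. \<Sum>j<m. (card {a\<in>Nb b \<inter> insert x S. c' a = j})^2)
          = (\<Sum>b\<in>Bt. \<Sum>j<m. (old b j)^2) + 2 * g j0 + (\<Sum>b\<in>Bt. ind b)"
        unfolding sq e1 g_def by (simp add: sum.distrib sum_distrib_left)
      then show ?thesis by (simp add: distrib_left)
    qed
  also have "\<dots> \<le> (\<Sum>b\<in>Bt. (d b)^2 + m * d b) + 2 * (\<Sum>b\<in>Bt. ind b * d b) + m * (\<Sum>b\<in>Bt. ind b)"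
    using IH' mg by linarith
  also have "\<dots> \<le> (\<Sum>b\<in>Bt. (d b + ind b)^2 + m * (d b + ind b))"
    proof -
      have "(d b + ind b)^2 + m * (d b + ind b) \<ge> ((d b)^2 + m * d b) + 2 * (ind b * d b) + m * ind b" for b
        by (simp add: power2_eq_square algebra_simps)
      then have "(\<Sum>b\<in>Bt. (d b + ind b)^2 + m * (d b + ind b)) \<ge> (\<Sum>b\<in>Bt. ((d b)^2 + m * d b) + 2 * (ind b * d b) + m * ind b)"
        by (rule sum_mono)
      then show ?thesis by (simp add: sum.distrib sum_distrib_left)
    qed
  also have "\<dots> = (\<Sum>b\<in>Bt. (card (Nb b \<inter> insert x S))^2 + m * card (Nb b \<inter> insert x S))"
    by (simp add: dnew)
  finally show ?case using c' by blast
qed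


lemma class_bound:
  fixes Nb :: "'b \<Rightarrow> 'a set" and c :: "'a \<Rightarrow> nat"
  assumes fB: "finite Bt" and fA: "finite A" and sub: "\<forall>b\<in>Bt. Nb b \<subseteq> A" and m: "m > 0" and k: "k > 0"
    and c: "\<forall>a. c a < m"
    and col: "m * (\<Sum>b\<in>Bt. \<Sum>j<m. (card {a\<in>Nb b \<inter> A. c a = j})^2)
      \<le> (\<Sum>b\<in>Bt. (card (Nb b \<inter> A))^2 + m * card (Nb b \<inter> A))"
    and dk: "\<forall>b\<in>Bt. card (Nb b) \<le> m * k"
  shows "(\<Sum>b\<in>Bt. real (card (Nb b))) / 2 \<le> (\<Sum>j<m. \<Sum>b\<in>Bt. real (min (card {a\<in>Nb b. c a = j}) k))"
proof -
  define x where "x b j = card {a\<in>Nb b. c a = j}" for b j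
  define d where "d b = card (Nb b)" for b
  have NA: "Nb b \<inter> A = Nb b" if "b \<in> Bt" for b using sub that by blast
  have fN: "finite (Nb b)" if "b \<in> Bt" for b using sub that fA finite_subset by blast
  have col': "m * (\<Sum>b\<in>Bt. \<Sum>j<m. (x b j)^2) \<le> (\<Sum>b\<in>Bt. (d b)^2 + m * d b)"
  proof -
    have "(\<Sum>b\<in>Bt. \<Sum>j<m. (x b j)^2) = (\<Sum>b\<in>Bt. \<Sum>j<m. (card {a\<in>Nb b \<inter> A. c a = j})^2)"
      by (rule sum.cong) (auto simp: NA x_def)
    moreover have "(\<Sum>b\<in>Bt. (d b)^2 + m * d b) = (\<Sum>b\<in>Bt. (card (Nb b \<inter> A))^2 + m * card (Nb b \<inter> A))"
      by (rule sum.cong) (auto simp: NA d_def)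
    ultimately show ?thesis using col by simp
  qed
  have "(\<Sum>b\<in>Bt. (d b)^2 + m * d b) \<le> (\<Sum>b\<in>Bt. 2 * m * k * d b)"
  proof (rule sum_mono)
    fix b assume b: "b \<in> Bt"
    have "d b * d b \<le> m * k * d b" using dk b by (intro mult_right_mono) (simp_all add: d_def)
    moreover have "m * d b \<le> m * k * d b"
    proof -
      have "m * d b * 1 \<le> m * d b * k" using k by (intro mult_left_mono) simp_all
      then show ?thesis by (simp add: mult.commute mult.left_commute)
    qed
    moreover have "(d b)^2 = d b * d b" by (simp add: power2_eq_square)
    moreover have "2 * m * k * d b = 2 * (m * k * d b)" by simp
    ultimately show "(d b)^2 + m * d b \<le> 2 * m * k * d b" by linarith
  qed
  also have "\<dots> = m * (2 * k * (\<Sum>b\<in>Bt. d b))"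
    by (simp only: sum_distrib_left[symmetric] mult.assoc)
  finally have "m * (\<Sum>b\<in>Bt. \<Sum>j<m. (x b j)^2) \<le> m * (2 * k * (\<Sum>b\<in>Bt. d b))" using col' by linarith
  then have X: "(\<Sum>b\<in>Bt. \<Sum>j<m. (x b j)^2) \<le> 2 * k * (\<Sum>b\<in>Bt. d b)" using m by simp
  have kr: "real k > 0" using k by simp
  have sumx: "(\<Sum>j<m. real (x b j)) = real (d b)" if "b \<in> Bt" for b
    using card_partition_colors[OF fN[OF that], where c=c and m=m] c
    by (simp add: x_def d_def flip: of_nat_sum)
  have s1: "(\<Sum>j<m. \<Sum>b\<in>Bt. real (min (x b j) k)) = (\<Sum>b\<in>Bt. \<Sum>j<m. real (min (x b j) k))"
    by (rule sum.swap)
  have s2: "(\<Sum>b\<in>Bt. \<Sum>j<m. (real (x b j) - real (x b j)^2 / (4 * real k))) \<le> (\<Sum>b\<in>Bt. \<Sum>j<m. real (min (x b j) k))"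
    by (intro sum_mono min_quad_bound k)
  have s3: "(\<Sum>b\<in>Bt. \<Sum>j<m. (real (x b j) - real (x b j)^2 / (4 * real k)))
      = (\<Sum>b\<in>Bt. real (d b)) - real (\<Sum>b\<in>Bt. \<Sum>j<m. (x b j)^2) / (4 * real k)"
    using sumx by (simp add: sum_subtractf sum_divide_distrib)
  have s4: "real (\<Sum>b\<in>Bt. \<Sum>j<m. (x b j)^2) / (4 * real k) \<le> real (2 * k * (\<Sum>b\<in>Bt. d b)) / (4 * real k)"
  proof (rule divide_right_mono)
    show "real (\<Sum>b\<in>Bt. \<Sum>j<m. (x b j)^2) \<le> real (2 * k * (\<Sum>b\<in>Bt. d b))"
      using X by (simp only: of_nat_le_iff)
  qed (use kr in simp)
  have s5: "real (2 * k * (\<Sum>b\<in>Bt. d b)) / (4 * real k) = (\<Sum>b\<in>Bt. real (d b)) / 2"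
    using kr by (simp add: of_nat_sum)
  have "(\<Sum>b\<in>Bt. real (d b)) / 2 \<le> (\<Sum>j<m. \<Sum>b\<in>Bt. real (min (x b j) k))"
    using s1 s2 s3 s4 s5 by linarith
  then show ?thesis by (simp add: x_def d_def)
qed


lemma lt_div_succ: fixes x k :: nat assumes "k > 0" shows "x < (x div k + 1) * k"
proof -
  have "x = k * (x div k) + x mod k" by simp
  moreover have "x mod k < k" using assms by simp
  moreover have "(x div k + 1) * k = k * (x div k) + k" by (simp add: algebra_simps)
  ultimately show ?thesis by linarith
qed

lemma dyadic_unique:
  fixes x i j :: nat
  assumes "2 ^ i \<le> x" "x < 2 * 2 ^ i" "2 ^ j \<le> x" "x < 2 * 2 ^ j"
  shows "i = j"
proof (rule ccontr)
  assume "i \<noteq> j"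
  then consider "i < j" | "j < i" by linarith
  then show False
  proof cases
    case 1
    then have "(2::nat) ^ (i + 1) \<le> 2 ^ j" by (intro power_increasing) auto
    then show False using assms by simp
  next
    case 2
    then have "(2::nat) ^ (j + 1) \<le> 2 ^ i" by (intro power_increasing) auto
    then show False using assms by simp
  qed
qed

theorem lemma9:
  "\<exists>k0::nat. \<forall>k::nat. k \<ge> k0 \<longrightarrow>
     (\<forall>(V::nat set) E A B.
        is_graph V E \<and> is_bipartite_with V E A B \<and>
        max_degree V E \<le> k ^ 7 \<and>
        avg_degree V E \<ge> real k / 4 \<and>
        (\<forall>v\<in>A. degree E v \<le> k)
        \<longrightarrow> (\<exists>V' E'. is_subgraph V' E' V E \<and> V' \<noteq> {} \<and>
               max_degree V' E' \<le> k \<and>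
               avg_degree V' E' \<ge> real k / (400 * log 2 (real k))))"
proof (intro exI[of _ 2] allI impI)
  fix k :: nat assume k2: "k \<ge> 2"
  fix V :: "nat set" and E A B
  assume H: "is_graph V E \<and> is_bipartite_with V E A B \<and>
        max_degree V E \<le> k ^ 7 \<and> avg_degree V E \<ge> real k / 4 \<and> (\<forall>v\<in>A. degree E v \<le> k)"
  then have G: "is_graph V E" and bip: "is_bipartite_with V E A B" and maxd: "max_degree V E \<le> k ^ 7"
    and avg: "avg_degree V E \<ge> real k / 4" and Adeg: "\<forall>v\<in>A. degree E v \<le> k" by auto
  have finV: "finite V" and Eedge: "\<forall>e\<in>E. \<exists>u v. u \<in> V \<and> v \<in> V \<and> u \<noteq> v \<and> e = {u, v}"
    using G by (auto simp: is_graph_def)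
  have AB: "A \<union> B = V" and disj: "A \<inter> B = {}" and Ebip: "\<forall>e\<in>E. \<exists>a b. a \<in> A \<and> b \<in> B \<and> e = {a, b}"
    using bip by (auto simp: is_bipartite_with_def)
  have finA: "finite A" and finB: "finite B" using AB finV by (auto intro: finite_subset)
  have "E \<subseteq> Pow V" using Eedge by auto
  then have finE: "finite E" using finV by (meson finite_Pow_iff finite_subset)
  have kpos: "k > 0" using k2 by simp
  have kr: "real k \<ge> 2" using k2 by simp

  define nbr where "nbr b = {a\<in>A. {a, b} \<in> E}" for b
  define d where "d b = card (nbr b)" for b
  have nbrA: "nbr b \<subseteq> A" for b by (auto simp: nbr_def)
  have finnbr: "finite (nbr b)" for b using finA nbrA finite_subset by blast
  have degv: "degree E v \<le> k ^ 7" if "v \<in> V" for v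
  proof -
    have "degree E v \<le> Max (insert 0 (degree E ` V))"
      using finV that by (intro Max_ge) auto
    then show ?thesis using maxd by (simp add: max_degree_def)
  qed
  have dle: "d b \<le> degree E b" for b
  proof -
    have "inj_on (\<lambda>a. {a, b}) (nbr b)" by (auto simp: inj_on_def doubleton_eq_iff)
    moreover have "(\<lambda>a. {a, b}) ` nbr b \<subseteq> {e\<in>E. b \<in> e}" by (auto simp: nbr_def)
    moreover have "finite {e\<in>E. b \<in> e}" using finE by simp
    ultimately show ?thesis unfolding d_def degree_def by (rule card_inj_on_le)
  qed
  have dk7: "d b \<le> k ^ 7" if "b \<in> B" for b using dle[of b] degv[of b] that AB by auto

  define s where "s = (\<Sum>b\<in>B. d b)"
  have eles: "card E \<le> s"
  proof -
    have "E \<subseteq> (\<Union>b\<in>B. (\<lambda>a. {a, b}) ` nbr b)"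
    proof
      fix e assume "e \<in> E"
      then obtain a b where "a \<in> A" "b \<in> B" "e = {a, b}" using Ebip by blast
      then show "e \<in> (\<Union>b\<in>B. (\<lambda>a. {a, b}) ` nbr b)" using \<open>e \<in> E\<close> by (auto simp: nbr_def)
    qed
    then have "card E \<le> card (\<Union>b\<in>B. (\<lambda>a. {a, b}) ` nbr b)"
      using finB finnbr by (intro card_mono) auto
    also have "\<dots> \<le> (\<Sum>b\<in>B. card ((\<lambda>a. {a, b}) ` nbr b))" using finB by (rule card_UN_le)
    also have "\<dots> \<le> s" unfolding s_def d_def by (intro sum_mono card_image_le) (use finA nbrA in \<open>auto intro: finite_subset\<close>)
    finally show ?thesis .
  qed
  have cVpos: "card V > 0" and cV: "real k * real (card V) \<le> 8 * real (card E)"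
  proof -
    show "card V > 0"
    proof (rule ccontr)
      assume "\<not> card V > 0"
      then have "avg_degree V E = 0" by (simp add: avg_degree_def)
      then show False using avg kpos by simp
    qed
    then show "real k * real (card V) \<le> 8 * real (card E)"
      using avg by (simp add: avg_degree_def field_simps)
  qed
  have sE: "real (card E) \<le> real s" using eles by simp
  have Epos: "card E > 0"
  proof -
    have "real k * real (card V) > 0" using kpos cVpos by simp
    then show ?thesis using cV by simp
  qed

  obtain L where L: "2 ^ L \<le> k" "k < 2 ^ (L + 1)" using ex_power_ivl1[of 2 k] k2 by auto
  define N where "N = 7 * L + 7"
  have k7: "k ^ 7 < 2 ^ N"
  proof -
    have "k ^ 7 < (2 ^ (L + 1)) ^ 7" using L(2) by (intro power_strict_mono) auto
    also have "((2::nat) ^ (L + 1)) ^ 7 = 2 ^ N" by (simp add: N_def power_mult[symmetric] power_add mult.commute)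
    finally show ?thesis .
  qed
  have logL: "real L \<le> log 2 (real k)" using le_log2_of_power[OF L(1)] .
  have logk: "log 2 (real k) \<ge> 1" using kr by simp

  define Bc where "Bc t = {b\<in>B. 2 ^ t \<le> d b \<and> d b < 2 ^ (t + 1)}" for t
  define mm where "mm t = 2 * 2 ^ t div k + 1" for t
  have finBc: "finite (Bc t)" for t using finB by (simp add: Bc_def)
  have mmpos: "mm t > 0" for t by (simp add: mm_def)
  have "\<forall>t. \<exists>c::nat\<Rightarrow>nat. (\<forall>a. c a < mm t) \<and>
    mm t * (\<Sum>b\<in>Bc t. \<Sum>j<mm t. (card {a\<in>nbr b \<inter> A. c a = j})^2)
      \<le> (\<Sum>b\<in>Bc t. (card (nbr b \<inter> A))^2 + mm t * card (nbr b \<inter> A))"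
    using greedy_color[OF finBc mmpos finA] by blast
  from choice[OF this] obtain C where C0: "\<forall>t. (\<forall>a. C t a < mm t) \<and>
    mm t * (\<Sum>b\<in>Bc t. \<Sum>j<mm t. (card {a\<in>nbr b \<inter> A. C t a = j})^2)
      \<le> (\<Sum>b\<in>Bc t. (card (nbr b \<inter> A))^2 + mm t * card (nbr b \<inter> A))"
    by blast
  note C = C0[rule_format]
  define kept where "kept t j = (\<Sum>b\<in>Bc t. real (min (card {a\<in>nbr b. C t a = j}) k))" for t j
  define SS where "SS t j = {a\<in>A. C t a = j}" for t j
  define lam where "lam = real k / (800 * log 2 (real k))"
  have lam0: "lam \<ge> 0" using logk by (simp add: lam_def)
  define T where "T t j = kept t j - lam * (real (card (SS t j)) + real (card (Bc t)))" for t j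

  have keptb: "(\<Sum>b\<in>Bc t. real (d b)) / 2 \<le> (\<Sum>j<mm t. kept t j)" for t
  proof -
    have "\<forall>b\<in>Bc t. card (nbr b) \<le> mm t * k"
    proof
      fix b assume "b \<in> Bc t"
      then have "d b < 2 * 2 ^ t" by (simp add: Bc_def)
      also have "\<dots> < mm t * k" unfolding mm_def by (rule lt_div_succ[OF kpos])
      finally show "card (nbr b) \<le> mm t * k" by (simp add: d_def)
    qed
    note cb = class_bound[where Nb=nbr and c="C t" and Bt="Bc t" and A=A and m="mm t" and k=k,
       OF finBc[of t] finA _ mmpos[of t] kpos]
    have "(\<Sum>b\<in>Bc t. real (card (nbr b))) / 2 \<le> (\<Sum>j<mm t. \<Sum>b\<in>Bc t. real (min (card {a\<in>nbr b. C t a = j}) k))"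
      by (rule cb) (use nbrA C[of t] \<open>\<forall>b\<in>Bc t. card (nbr b) \<le> mm t * k\<close> in auto)
    then show ?thesis by (simp add: kept_def d_def)
  qed
  have cardSS: "(\<Sum>j<mm t. real (card (SS t j))) = real (card A)" for t
    using card_partition_colors[OF finA, where c="C t" and m="mm t"] C[of t]
    by (simp add: SS_def flip: of_nat_sum)
  have mmB: "real (mm t) * real (card (Bc t)) \<le> (\<Sum>b\<in>Bc t. 2 * real (d b) / real k + 1)" for t
  proof -
    have "real (mm t) * real (card (Bc t)) = (\<Sum>b\<in>Bc t. real (mm t))" by simp
    also have "\<dots> \<le> (\<Sum>b\<in>Bc t. 2 * real (d b) / real k + 1)"
    proof (rule sum_mono)
      fix b assume b: "b \<in> Bc t"
      have "real (2 * 2 ^ t div k) \<le> real (2 * 2 ^ t) / real k" by (rule of_nat_div_le_of_nat)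
      also have "\<dots> \<le> 2 * real (d b) / real k"
        using b kpos by (intro divide_right_mono) (auto simp: Bc_def)
      finally show "real (mm t) \<le> 2 * real (d b) / real k + 1" by (simp add: mm_def)
    qed
    finally show ?thesis .
  qed
  have Tt: "(\<Sum>j<mm t. T t j) \<ge> (\<Sum>b\<in>Bc t. real (d b)) / 2
      - lam * (real (card A) + (\<Sum>b\<in>Bc t. 2 * real (d b) / real k + 1))" for t
  proof -
    have "(\<Sum>j<mm t. T t j) = (\<Sum>j<mm t. kept t j) - lam * ((\<Sum>j<mm t. real (card (SS t j))) + real (mm t) * real (card (Bc t)))"
      by (simp add: T_def sum_subtractf sum_distrib_left sum.distrib algebra_simps)
    then show ?thesis using keptb[of t] cardSS[of t] mmB[of t] lam0
      by (smt (verit) mult_left_mono)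
  qed
  define U where "U = (\<Union>t\<in>{..<N}. Bc t)"
  have UB: "U \<subseteq> B" by (auto simp: U_def Bc_def)
  have finU: "finite U" using UB finB finite_subset by blast
  have sumU: "(\<Sum>t<N. \<Sum>b\<in>Bc t. f b) = (\<Sum>b\<in>U. f b)" for f :: "nat \<Rightarrow> real"
    unfolding U_def
    by (rule sum.UNION_disjoint[symmetric]) (use finBc dyadic_unique in \<open>auto simp: Bc_def\<close>)
  have dU: "(\<Sum>b\<in>U. real (d b)) = real s"
  proof -
    have "(\<Sum>b\<in>U. real (d b)) = (\<Sum>b\<in>B. real (d b))"
    proof (rule sum.mono_neutral_left[OF finB UB], rule ballI)
      fix b assume b: "b \<in> B - U"
      show "real (d b) = 0"
      proof (rule ccontr)
        assume "real (d b) \<noteq> 0"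
        then have "d b \<ge> 1" by simp
        then obtain t where t: "2 ^ t \<le> d b" "d b < 2 ^ (t + 1)" using ex_power_ivl1[of 2 "d b"] by auto
        have "(2::nat) ^ t < 2 ^ N" using t(1) dk7[of b] b k7 by (meson DiffD1 le_less_trans order_trans)
        then have "t < N" by simp
        then have "b \<in> U" using t b by (auto simp: U_def Bc_def)
        then show False using b by simp
      qed
    qed
    then show ?thesis by (simp add: s_def)
  qed
  have oneU: "(\<Sum>b\<in>U. 2 * real (d b) / real k + 1) \<le> 2 * real s / real k + real (card B)"
  proof -
    have "(\<Sum>b\<in>U. 2 * real (d b) / real k + 1) \<le> (\<Sum>b\<in>B. 2 * real (d b) / real k + 1)"
      by (rule sum_mono2[OF finB UB]) auto
    also have "\<dots> = 2 * real s / real k + real (card B)"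
      by (simp add: sum.distrib s_def sum_divide_distrib sum_distrib_left)
    finally show ?thesis .
  qed
  have total: "(\<Sum>t<N. \<Sum>j<mm t. T t j) \<ge> real s / 2 - lam * (real N * real (card A) + 2 * real s / real k + real (card B))"
  proof -
    have "(\<Sum>t<N. \<Sum>j<mm t. T t j) \<ge> (\<Sum>t<N. (\<Sum>b\<in>Bc t. real (d b)) / 2
      - lam * (real (card A) + (\<Sum>b\<in>Bc t. 2 * real (d b) / real k + 1)))"
      by (rule sum_mono) (rule Tt)
    also have "(\<Sum>t<N. (\<Sum>b\<in>Bc t. real (d b)) / 2
      - lam * (real (card A) + (\<Sum>b\<in>Bc t. 2 * real (d b) / real k + 1)))
      = (\<Sum>b\<in>U. real (d b)) / 2 - lam * (real N * real (card A) + (\<Sum>b\<in>U. 2 * real (d b) / real k + 1))"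
      using sumU[of "\<lambda>_. 1"]
      by (simp add: sum_subtractf sum_divide_distrib[symmetric] sum_distrib_left[symmetric] sum.distrib sumU)
    finally show ?thesis using dU oneU lam0 by (smt (verit) mult_left_mono)
  qed
  have totpos: "(\<Sum>t<N. \<Sum>j<mm t. T t j) > 0"
  proof -
    have cA: "real (card A) \<le> real (card V)" and cB: "real (card B) \<le> real (card V)"
      using AB finV by (auto intro: card_mono)
    have cV8: "real (card V) \<le> 8 * real s / real k" using cV sE kpos by (simp add: field_simps)
    have "real N * real (card A) + 2 * real s / real k + real (card B) \<le> (real N + 1) * real (card V) + 2 * real s / real k"
    proof -
      have "real N * real (card A) \<le> real N * real (card V)" using cA by (intro mult_left_mono) auto
      moreover have "(real N + 1) * real (card V) = real N * real (card V) + real (card V)" by (simp add: algebra_simps)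
      ultimately show ?thesis using cB by linarith
    qed
    also have "\<dots> \<le> (real N + 1) * (8 * real s / real k) + 2 * real s / real k"
      using cV8 by (intro add_right_mono mult_left_mono) auto
    also have "\<dots> = (8 * real N + 10) * real s / real k" using kpos by (simp add: field_simps)
    finally have X: "real N * real (card A) + 2 * real s / real k + real (card B) \<le> (8 * real N + 10) * real s / real k" .
    have NL: "8 * real N + 10 \<le> 122 * log 2 (real k)" using logL logk by (simp add: N_def)
    have "lam * ((8 * real N + 10) * real s / real k) = (8 * real N + 10) * real s / (800 * log 2 (real k))"
    proof -
      have a1: "real k \<noteq> 0" using kr by linarith
      have a2: "log 2 (real k) \<noteq> 0" using logk by linarith
      note a = a1 a2
      show ?thesis unfolding lam_def using a by (simp add: field_simps)
    qed
    also have "\<dots> \<le> 122 * log 2 (real k) * real s / (800 * log 2 (real k))"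
      using NL logk by (intro divide_right_mono mult_right_mono) auto
    also have "\<dots> = real s * (122 / 800)"
    proof -
      have a: "log 2 (real k) \<noteq> 0" using logk by linarith
      show ?thesis using a by (simp add: field_simps)
    qed
    finally have Y: "lam * ((8 * real N + 10) * real s / real k) \<le> real s * (122 / 800)" .
    have "lam * (real N * real (card A) + 2 * real s / real k + real (card B)) \<le> real s * (122 / 800)"
      using X Y lam0 by (smt (verit) mult_left_mono)
    moreover have "real s > 0" using Epos sE by simp
    ultimately show ?thesis using total by linarith
  qed
  obtain t j where tj: "t < N" "j < mm t" "T t j > 0"
  proof (rule ccontr)
    assume "\<not> ?thesis"
    then have "\<forall>t<N. \<forall>j<mm t. T t j \<le> 0" by (meson not_less that)
    then have "(\<Sum>t<N. \<Sum>j<mm t. T t j) \<le> 0" by (intro sum_nonpos) auto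
    then show False using totpos by simp
  qed
  show "\<exists>V' E'. is_subgraph V' E' V E \<and> V' \<noteq> {} \<and> max_degree V' E' \<le> k \<and>
               avg_degree V' E' \<ge> real k / (400 * log 2 (real k))"
  proof -
    define Bt where "Bt = Bc t"
    define S where "S = SS t j"
    have "\<forall>b. \<exists>K. K \<subseteq> {a\<in>nbr b. C t a = j} \<and> card K = min (card {a\<in>nbr b. C t a = j}) k"
    proof
      fix b
      have "min (card {a\<in>nbr b. C t a = j}) k \<le> card {a\<in>nbr b. C t a = j}" by simp
      then obtain K where "K \<subseteq> {a\<in>nbr b. C t a = j}" "card K = min (card {a\<in>nbr b. C t a = j}) k"
        by (rule obtain_subset_with_card_n)
      then show "\<exists>K. K \<subseteq> {a\<in>nbr b. C t a = j} \<and> card K = min (card {a\<in>nbr b. C t a = j}) k" by blast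
    qed
    from choice[OF this] obtain K where K0: "\<forall>b. K b \<subseteq> {a\<in>nbr b. C t a = j} \<and> card (K b) = min (card {a\<in>nbr b. C t a = j}) k"
      by blast
    have KS: "K b \<subseteq> S" for b
    proof
      fix x assume "x \<in> K b"
      then have "x \<in> nbr b" "C t x = j" using K0 by blast+
      then show "x \<in> S" using nbrA[of b] by (auto simp: S_def SS_def)
    qed
    have KA: "K b \<subseteq> A" for b using KS by (auto simp: S_def SS_def)
    have KE: "a \<in> K b \<Longrightarrow> {a, b} \<in> E" for a b using K0 by (auto simp: nbr_def)
    have Kc: "card (K b) = min (card {a\<in>nbr b. C t a = j}) k" for b using K0 by blast
    have finK: "finite (K b)" for b using KA finA finite_subset by blast
    have BtB: "Bt \<subseteq> B" by (auto simp: Bt_def Bc_def)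
    have SA: "S \<subseteq> A" by (auto simp: S_def SS_def)
    have finS: "finite S" and finBt: "finite Bt" using SA BtB finA finB finite_subset by auto
    define E' where "E' = (\<Union>b\<in>Bt. (\<lambda>a. {a, b}) ` K b)"
    define V' where "V' = S \<union> Bt"
    have neq: "a \<noteq> b" if "a \<in> A" "b \<in> B" for a b using disj that by blast
    have sg: "is_subgraph V' E' V E"
      unfolding is_subgraph_def is_graph_def
    proof (intro conjI ballI)
      show "finite V'" using finS finBt by (simp add: V'_def)
      show "V' \<subseteq> V" using SA BtB AB by (auto simp: V'_def)
      show "E' \<subseteq> E" using KE by (auto simp: E'_def)
      fix e assume "e \<in> E'"
      then obtain a b where ab: "b \<in> Bt" "a \<in> K b" "e = {a, b}" by (auto simp: E'_def)
      then show "\<exists>u v. u \<in> V' \<and> v \<in> V' \<and> u \<noteq> v \<and> e = {u, v}"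
        using KS KA BtB neq by (auto simp: V'_def) blast
    qed
    have cardE': "card E' = (\<Sum>b\<in>Bt. card (K b))"
    proof -
      have "card E' = (\<Sum>b\<in>Bt. card ((\<lambda>a. {a, b}) ` K b))"
        unfolding E'_def
      proof (rule card_UN_disjoint[OF finBt])
        show "\<forall>b\<in>Bt. finite ((\<lambda>a. {a, b}) ` K b)" using finK by simp
        show "\<forall>b\<in>Bt. \<forall>b'\<in>Bt. b \<noteq> b' \<longrightarrow> (\<lambda>a. {a, b}) ` K b \<inter> (\<lambda>a. {a, b'}) ` K b' = {}"
        proof (intro ballI impI)
          fix b b' assume b: "b \<in> Bt" "b' \<in> Bt" "b \<noteq> b'"
          show "(\<lambda>a. {a, b}) ` K b \<inter> (\<lambda>a. {a, b'}) ` K b' = {}"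
          proof (rule ccontr)
            assume "(\<lambda>a. {a, b}) ` K b \<inter> (\<lambda>a. {a, b'}) ` K b' \<noteq> {}"
            then obtain a a' where aa: "a \<in> K b" "a' \<in> K b'" "{a, b} = {a', b'}" by blast
            then have "a = b'" using b by (auto simp: doubleton_eq_iff)
            then show False using aa KA BtB b disj by blast
          qed
        qed
      qed
      also have "\<dots> = (\<Sum>b\<in>Bt. card (K b))"
        by (intro sum.cong refl card_image) (auto simp: inj_on_def doubleton_eq_iff)
      finally show ?thesis .
    qed
    have cardV': "card V' = card S + card Bt"
      unfolding V'_def using finS finBt SA BtB disj by (intro card_Un_disjoint) auto
    have Tpos: "real (card E') > lam * real (card V')"
      using tj(3) unfolding T_def kept_def cardE' cardV' Bt_def S_def
      by (simp add: Kc)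
    have BtNE: "Bt \<noteq> {}"
    proof
      assume "Bt = {}"
      then have "real (card E') = 0" by (simp add: cardE')
      then show False using Tpos lam0 by (smt (verit) mult_nonneg_nonneg of_nat_0_le_iff)
    qed
    then have V'NE: "V' \<noteq> {}" by (simp add: V'_def)
    have cV'pos: "card V' > 0" using V'NE sg by (auto simp: is_subgraph_def is_graph_def card_gt_0_iff)
    have degE': "degree E' v \<le> k" if v: "v \<in> V'" for v
    proof (cases "v \<in> A")
      case True
      have "degree E' v \<le> degree E v"
        unfolding degree_def using sg finE by (intro card_mono) (auto simp: is_subgraph_def)
      then show ?thesis using Adeg True by fastforce
    next
      case False
      then have vB: "v \<in> Bt" using v SA by (auto simp: V'_def)
      have "{e\<in>E'. v \<in> e} \<subseteq> (\<lambda>a. {a, v}) ` K v"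
      proof
        fix e assume e: "e \<in> {e\<in>E'. v \<in> e}"
        then obtain a b where ab: "b \<in> Bt" "a \<in> K b" "e = {a, b}" by (auto simp: E'_def)
        have "v \<noteq> a" using ab KA False by blast
        then have "v = b" using e ab by auto
        then show "e \<in> (\<lambda>a. {a, v}) ` K v" using ab by auto
      qed
      then have "degree E' v \<le> card ((\<lambda>a. {a, v}) ` K v)"
        unfolding degree_def using finK by (intro card_mono) auto
      also have "\<dots> \<le> card (K v)" by (rule card_image_le[OF finK])
      also have "\<dots> \<le> k" by (simp add: Kc)
      finally show ?thesis .
    qed
    have md: "max_degree V' E' \<le> k"
      unfolding max_degree_def using sg degE'
      by (subst Max_le_iff) (auto simp: is_subgraph_def is_graph_def)
    have "real k / (400 * log 2 (real k)) = 2 * lam" by (simp add: lam_def)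
    also have "\<dots> \<le> 2 * real (card E') / real (card V')"
      using Tpos cV'pos by (simp add: field_simps)
    finally have "avg_degree V' E' \<ge> real k / (400 * log 2 (real k))" by (simp add: avg_degree_def)
    then show ?thesis using sg V'NE md by blast
  qed
qed

end
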